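(* Consider a ROS~2 application executed on a single processor by the events executor with the two-queue mechanism described in the context, under the standing assumptions of the context (including LIFO-ordered delivery of messages by the communication middleware and LIFO tie-breaking among equal priorities). At every scheduling decision, the scheduling logic schedules a highest-priority released subtask.
   Context: Model: a ROS~2 application is abstracted (by unfolding: each subscription callback with several parents is virtually duplicated so each copy has one parent) as a forest of trees of subtasks (callbacks). Roots (timers or externally triggered subscriptions) are released periodically or sporadically, and each root job has a known integer priority, which may vary between jobs (e.g., deadlines for EDF). A child subtask is released immediately when its parent completes (and only then), and inherits its parent's priority (fixed job-level priority). Callbacks spawn no threads, do not block on I/O and have bounded execution time; execution is non-preemptive on a single processor, so preemption can only occur between subtasks. Larger priority values mean higher priority. Executor mechanism: a released root subtask is pushed into a priority queue (root_queue) ordered by priority; a released child subtask is assigned the value latest_priority and pushed onto a LIFO queue (child_queue); at each scheduling decision the top elements of the two queues are compared, the one of greater priority is popped and executed, and latest_priority is set to its priority. Messages consumed by subscriptions are delivered by the middleware in LIFO order. *)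

theory Defs
  imports Main "HOL-Library.Multiset"
begin

text \<open>Subtasks (callbacks, after unfolding) are elements of a type 't; T is the
finite set of subtasks of the application, R the roots (timers or externally
triggered subscriptions) and ch t the list of children of subtask t.\<close>

definition forest :: "'t set \<Rightarrow> 't set \<Rightarrow> ('t \<Rightarrow> 't list) \<Rightarrow> bool" where
  "forest T R ch \<longleftrightarrow>
     finite T \<and> R \<subseteq> T \<and>
     (\<forall>t\<in>T. set (ch t) \<subseteq> T \<and> distinct (ch t)) \<and>
     (\<forall>t\<in>T. \<forall>u\<in>T. \<forall>c. c \<in> set (ch t) \<and> c \<in> set (ch u) \<longrightarrow> t = u) \<and>
     (\<forall>t\<in>T. \<forall>c\<in>set (ch t). c \<notin> R) \<and>
     (\<forall>t\<in>T. t \<notin> R \<longrightarrow> (\<exists>u\<in>T. t \<in> set (ch u))) \<and>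
     wf {(c, t). t \<in> T \<and> c \<in> set (ch t)}"

text \<open>A job (released instance of a subtask) records its subtask, its true
(fixed job-level) priority, the key under which the executor stores it
(the root priority for roots, the value of latest_priority for children),
and a release stamp (release order, used for LIFO tie-breaking).
Larger priority values mean higher priority.\<close>

datatype 't job = Job (jtask: 't) (jprio: int) (jkey: int) (jstamp: nat)

record 't exstate =
  root_queue :: "'t job list"      \<comment> \<open>priority queue (stored as a bag)\<close>
  child_queue :: "'t job list"     \<comment> \<open>LIFO stack, head = top\<close>
  latest_priority :: int
  running :: "'t job option"       \<comment> \<open>job currently executing (non-preemptive)\<close>
  clock :: nat

definition better :: "'t job \<Rightarrow> 't job \<Rightarrow> bool" where
  "better a b \<longleftrightarrow> jkey a > jkey b \<or> (jkey a = jkey b \<and> jstamp a > jstamp b)"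

fun pq_top :: "'t job list \<Rightarrow> 't job option" where
  "pq_top [] = None"
| "pq_top (x # xs) = (case pq_top xs of None \<Rightarrow> Some x
                        | Some y \<Rightarrow> if better y x then Some y else Some x)"

definition dispatch :: "('t, 'e) exstate_scheme \<Rightarrow> ('t job \<times> ('t, 'e) exstate_scheme) option" where
  "dispatch s =
     (case (pq_top (root_queue s), child_queue s) of
        (None, []) \<Rightarrow> None
      | (Some r, []) \<Rightarrow> Some (r, s\<lparr>root_queue := remove1 r (root_queue s)\<rparr>)
      | (None, c # cs) \<Rightarrow> Some (c, s\<lparr>child_queue := cs\<rparr>)
      | (Some r, c # cs) \<Rightarrow>
          if better c r then Some (c, s\<lparr>child_queue := cs\<rparr>)
          else Some (r, s\<lparr>root_queue := remove1 r (root_queue s)\<rparr>))"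

text \<open>Released (pending) subtasks: everything in the two queues.\<close>
definition pending :: "('t, 'e) exstate_scheme \<Rightarrow> 't job set" where
  "pending s = set (root_queue s) \<union> set (child_queue s)"

definition child_jobs :: "'t job \<Rightarrow> int \<Rightarrow> nat \<Rightarrow> 't list \<Rightarrow> 't job list" where
  "child_jobs j lp k cs = map (\<lambda>(c, i). Job c (jprio j) lp i) (zip cs [k..<k + length cs])"

inductive reachable :: "'t set \<Rightarrow> ('t \<Rightarrow> 't list) \<Rightarrow> 't exstate \<Rightarrow> bool"
  for R :: "'t set" and ch :: "'t \<Rightarrow> 't list" where
  init: "reachable R ch \<lparr>root_queue = [], child_queue = [], latest_priority = (l0::int),
                          running = None, clock = 0\<rparr>"
\<comment> \<open>release of a root job with an arbitrary priority p, at any time\<close>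
| release: "reachable R ch s \<Longrightarrow> t \<in> R \<Longrightarrow>
     reachable R ch (s\<lparr>root_queue := Job t (p::int) p (clock s) # root_queue s,
                       clock := Suc (clock s)\<rparr>)"
| schedule: "reachable R ch s \<Longrightarrow> running s = None \<Longrightarrow> dispatch s = Some (j, s') \<Longrightarrow>
     reachable R ch (s'\<lparr>latest_priority := jkey j, running := Some j\<rparr>)"
\<comment> \<open>completion of the running job: its children are released and pushed
   (in any order) onto the child queue with key latest_priority\<close>
| complete: "reachable R ch s \<Longrightarrow> running s = Some j \<Longrightarrow> mset cs = mset (ch (jtask j)) \<Longrightarrow>
     reachable R ch (s\<lparr>child_queue := rev (child_jobs j (latest_priority s) (clock s) cs)
                                       @ child_queue s,
                       running := None,
                       clock := clock s + length cs\<rparr>)"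

end

theory Submission
  imports Defs
begin

lemma pq_top_None: "pq_top xs = None \<longleftrightarrow> xs = []"
  by (induction xs) (auto split: option.splits)

lemma pq_top_Some: "pq_top xs = Some r \<Longrightarrow> r \<in> set xs \<and> (\<forall>x\<in>set xs. jkey x \<le> jkey r)"
proof (induction xs arbitrary: r)
  case Nil then show ?case by simp
next
  case (Cons a xs)
  show ?case
  proof (cases "pq_top xs")
    case None
    then show ?thesis using Cons by (simp add: pq_top_None)
  next
    case (Some y)
    with Cons.IH have "y \<in> set xs \<and> (\<forall>x\<in>set xs. jkey x \<le> jkey y)" by blast
    then show ?thesis using Cons.prems Some
      by (auto simp: better_def split: if_splits)
  qed
qed

definition srt :: "'t job list \<Rightarrow> bool" where
  "srt xs = sorted_wrt (\<lambda>a b. jkey b \<le> jkey a) xs"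

lemma dispatch_prop:
  assumes "srt (child_queue s)" "dispatch s = Some (j, s')"
  shows "j \<in> pending s \<and> (\<forall>x\<in>pending s. jkey x \<le> jkey j) \<and> srt (child_queue s')
    \<and> set (root_queue s') \<subseteq> set (root_queue s) \<and> set (child_queue s') \<subseteq> set (child_queue s)
    \<and> latest_priority s' = latest_priority s \<and> running s' = running s \<and> clock s' = clock s"
proof (cases "pq_top (root_queue s)")
  case None
  then have rq: "root_queue s = []" by (simp add: pq_top_None)
  show ?thesis
  proof (cases "child_queue s")
    case Nil then show ?thesis using assms None by (simp add: dispatch_def)
  next
    case (Cons c cs)
    then show ?thesis using assms None rq
      by (auto simp: dispatch_def pending_def srt_def)
  qed
next
  case (Some r)
  note r = pq_top_Some[OF Some]
  show ?thesis
  proof (cases "child_queue s")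
    case Nil then show ?thesis using assms Some r set_remove1_subset[of r "root_queue s"]
      by (auto simp: dispatch_def pending_def srt_def)
  next
    case (Cons c cs)
    have srt: "\<forall>x\<in>set cs. jkey x \<le> jkey c" "srt cs"
      using assms(1) Cons by (auto simp: srt_def)
    show ?thesis
    proof (cases "better c r")
      case True
      then have ds: "j = c" "s' = s\<lparr>child_queue := cs\<rparr>"
        using assms(2) Some Cons by (auto simp: dispatch_def)
      have "jkey r \<le> jkey c" using True by (auto simp: better_def)
      then show ?thesis using ds srt r Cons by (auto simp: pending_def)
    next
      case False
      then have ds: "j = r" "s' = s\<lparr>root_queue := remove1 r (root_queue s)\<rparr>"
        using assms(2) Some Cons by (auto simp: dispatch_def)
      have "jkey c \<le> jkey r" using False by (auto simp: better_def)
      then show ?thesis using ds srt r Cons assms(1) set_remove1_subset[of r "root_queue s"]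
        by (auto simp: pending_def)
    qed
  qed
qed

definition inv :: "'t exstate \<Rightarrow> bool" where
  "inv s \<longleftrightarrow> (\<forall>j\<in>pending s. jkey j = jprio j) \<and> srt (child_queue s) \<and>
     (\<forall>j. running s = Some j \<longrightarrow> jkey j = jprio j \<and> latest_priority s = jkey j \<and>
          (\<forall>c\<in>set (child_queue s). jkey c \<le> jkey j))"

lemma child_jobs_set: "x \<in> set (child_jobs j lp k cs) \<Longrightarrow> jkey x = lp \<and> jprio x = jprio j"
  by (auto simp: child_jobs_def set_zip)

lemma srt_const: "\<forall>x\<in>set xs. jkey x = c \<Longrightarrow> srt xs"
  by (induction xs) (auto simp: srt_def)

lemma reach_inv: "reachable R ch s \<Longrightarrow> inv s"
proof (induction rule: reachable.induct)
  case (init l0)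
  then show ?case by (simp add: inv_def pending_def srt_def)
next
  case (release s t p)
  then show ?case by (auto simp: inv_def pending_def)
next
  case (schedule s j s')
  note d = dispatch_prop[OF _ schedule.hyps(3)]
  from schedule.IH have "srt (child_queue s)" by (simp add: inv_def)
  note d = d[OF this]
  show ?case using schedule.IH schedule.hyps d unfolding inv_def pending_def
    by auto
next
  case (complete s j cs)
  let ?n = "rev (child_jobs j (latest_priority s) (clock s) cs)"
  have lp: "latest_priority s = jkey j" "jkey j = jprio j"
    "\<forall>c\<in>set (child_queue s). jkey c \<le> jkey j"
    "\<forall>x\<in>pending s. jkey x = jprio x" "srt (child_queue s)"
    using complete.IH complete.hyps(2) unfolding inv_def by auto
  have k: "\<forall>x\<in>set ?n. jkey x = jkey j \<and> jprio x = jprio j"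
  proof
    fix x assume "x \<in> set ?n"
    then have "x \<in> set (child_jobs j (latest_priority s) (clock s) cs)" by simp
    from child_jobs_set[OF this] show "jkey x = jkey j \<and> jprio x = jprio j" using lp(1) by simp
  qed
  have s1: "srt ?n" using k by (intro srt_const[of _ "jkey j"]) blast
  have "srt (?n @ child_queue s)"
    unfolding srt_def sorted_wrt_append
    using s1 k lp(3,5) unfolding srt_def by fastforce
  moreover have "\<forall>x\<in>set ?n \<union> pending s. jkey x = jprio x" using k lp(2,4) by auto
  ultimately show ?case unfolding inv_def pending_def by auto
qed

theorem theorem1:
  fixes T R :: "'t set" and ch :: "'t \<Rightarrow> 't list" and s :: "'t exstate"
  assumes "forest T R ch"
    and "reachable R ch s"
    and "running s = None"
    and "pending s \<noteq> {}"
  shows "\<exists>j s'. dispatch s = Some (j, s') \<and> j \<in> pending s \<and>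
                (\<forall>j' \<in> pending s. jprio j' \<le> jprio j)"
proof -
  have I: "inv s" using reach_inv[OF assms(2)] .
  have "dispatch s \<noteq> None" using assms(4)
    by (auto simp: dispatch_def pending_def pq_top_None split: option.splits list.splits if_splits)
  then obtain j s' where ds: "dispatch s = Some (j, s')" by auto
  from I have srt: "srt (child_queue s)" by (simp add: inv_def)
  note dp = dispatch_prop[OF srt ds]
  from I have kp: "\<forall>x\<in>pending s. jkey x = jprio x" by (simp add: inv_def)
  have jp: "j \<in> pending s" using dp by blast
  have "\<forall>x\<in>pending s. jprio x \<le> jprio j"
  proof
    fix x assume "x \<in> pending s"
    then have "jkey x \<le> jkey j" using dp by blast
    then show "jprio x \<le> jprio j" using kp jp \<open>x \<in> pending s\<close> by simp
  qed
  then show ?thesis using ds jp by blast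
qed

end
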